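(* Let $n\ge1$, $\nu>2$, $X\sim t^{\mathrm{std}}_\nu(0,I_n)$, and $W=\frac{\nu+n}{\nu-2+X'X}$. For real $p,q$ let $$\zeta_{p,q}=\Big(\frac{\nu+n}{\nu-2}\Big)^{p/2}\Big(\frac{\nu-2}{2}\Big)^{q/2}\frac{\Gamma(\frac{\nu+n}2)}{\Gamma(\frac\nu2)}\frac{\Gamma(\frac{\nu+p-q}2)}{\Gamma(\frac{\nu+p+n}2)}.$$ (i) For any $p>2-\nu$ and any measurable $g:\mathbb R^n\to\mathbb R$ with $\mathbb E|g(Y)|<\infty$, where $Y\sim t^{\mathrm{std}}_{\nu+p}\big(0,\frac{\nu-2}{\nu+p-2}I_n\big)$, we have $\mathbb E[W^{p/2}g(X)]=\zeta_{p,0}\,\mathbb E[g(Y)]$. (ii) If moreover $g$ is homogeneous of degree $q<\nu+p$ (i.e. $g(cx)=c^qg(x)$ for all $c>0$) and $\mathbb E|g(\tilde Z)|<\infty$ for $\tilde Z\sim N(0,I_n)$, then $\mathbb E[W^{p/2}g(X)]=\zeta_{p,q}\,\mathbb E[g(\tilde Z)]$.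
   Context: For $\nu>2$ and positive definite $\Sigma$ ($n\times n$), the scaled multivariate $t$-distribution $t^{\mathrm{std}}_\nu(0,\Sigma)$ has density $\frac{\Gamma((\nu+n)/2)}{\Gamma(\nu/2)}[(\nu-2)\pi]^{-n/2}|\Sigma|^{-1/2}[1+\tfrac1{\nu-2}y'\Sigma^{-1}y]^{-(\nu+n)/2}$ on $\mathbb R^n$. *)

theory Defs
  imports "HOL-Analysis.Analysis"
begin

definition t_std_density :: "real \<Rightarrow> real^'n^'n \<Rightarrow> real^'n \<Rightarrow> real" where
  "t_std_density nu S y =
     Gamma ((nu + real CARD('n)) / 2) / Gamma (nu / 2)
     * ((nu - 2) * pi) powr (- real CARD('n) / 2)
     * (det S) powr (-1/2)
     * (1 + (y \<bullet> (matrix_inv S *v y)) / (nu - 2)) powr (- (nu + real CARD('n)) / 2)"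

definition t_std :: "real \<Rightarrow> real^'n^'n \<Rightarrow> (real^'n) measure" where
  "t_std nu S = density lborel (\<lambda>y. ennreal (t_std_density nu S y))"

definition std_normal_vec_density :: "real^'n \<Rightarrow> real" where
  "std_normal_vec_density x = (2 * pi) powr (- real CARD('n) / 2) * exp (- (x \<bullet> x) / 2)"

definition std_normal_vec :: "(real^'n) measure" where
  "std_normal_vec = density lborel (\<lambda>x. ennreal (std_normal_vec_density x))"

definition zeta :: "real \<Rightarrow> nat \<Rightarrow> real \<Rightarrow> real \<Rightarrow> real" where
  "zeta nu n p q =
     ((nu + real n) / (nu - 2)) powr (p / 2) * ((nu - 2) / 2) powr (q / 2)
     * (Gamma ((nu + real n) / 2) / Gamma (nu / 2))
     * (Gamma ((nu + p - q) / 2) / Gamma ((nu + p + real n) / 2))"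

end

theory Submission
  imports Defs
begin

lemma scaled_mat_mult: "(c *\<^sub>R mat 1 :: real^'n^'n) *v z = c *\<^sub>R z"
  by (simp add: scaleR_matrix_vector_assoc[symmetric])

lemma scaled_inv:
  fixes c :: real assumes c: "c \<noteq> 0"
  shows "matrix_inv (c *\<^sub>R mat 1 :: real^'n^'n) *v y = (1/c) *\<^sub>R y"
proof -
  let ?A = "c *\<^sub>R mat 1 :: real^'n^'n"
  have ex: "\<exists>A'. ?A ** A' = mat 1 \<and> A' ** ?A = mat 1"
    by (rule exI[of _ "(1/c) *\<^sub>R mat 1"]) (simp add: c matrix_scalar_ac)
  have "?A ** matrix_inv ?A = mat 1"
    unfolding matrix_inv_def using someI_ex[OF ex] by blast
  then have "?A *v (matrix_inv ?A *v y) = y"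
    by (simp add: matrix_vector_mul_assoc)
  then have "c *\<^sub>R (matrix_inv ?A *v y) = y"
    by (simp only: scaled_mat_mult)
  then have "(1/c) *\<^sub>R (c *\<^sub>R (matrix_inv ?A *v y)) = (1/c) *\<^sub>R y" by simp
  then show ?thesis using c by simp
qed

lemma det_scaled: "det (c *\<^sub>R mat 1 :: real^'n^'n) = c ^ CARD('n)"
proof -
  have "(c *\<^sub>R mat 1 :: real^'n^'n) = mat c" by (simp add: vec_eq_iff mat_def)
  then show ?thesis using det_matrix_scaleR[of c, where 'n='n] by (simp add: matrix_scaleR)
qed

lemma gamma_scaled:
  fixes a c :: real assumes a: "a > 0" and c: "c > 0"
  shows "(\<integral>\<^sup>+t. ennreal (indicator {0..} t * t powr (a-1) / exp (c*t)) \<partial>lborel) = ennreal (Gamma a * c powr (-a))"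
proof -
  let ?f = "\<lambda>t. ennreal (indicator {0..} t * t powr (a-1) / exp (c*t))"
  have "(\<integral>\<^sup>+t. ?f t \<partial>lborel) = (\<integral>\<^sup>+t. ?f t \<partial>density (distr lborel borel (\<lambda>x. 0 + (1/c) * x)) (\<lambda>_. ennreal (abs (1/c))))"
    using c by (subst lborel_real_affine[of "1/c" 0, symmetric]) auto
  also have "\<dots> = (\<integral>\<^sup>+x. ennreal (c powr (-a)) * ennreal (indicator {0..} x * x powr (a-1) / exp x) \<partial>lborel)"
    using c a
    by (subst nn_integral_density; simp; subst nn_integral_distr)
       (auto intro!: nn_integral_cong simp: indicator_def ennreal_mult'[symmetric] powr_divide powr_diff powr_minus field_simps)
  also have "\<dots> = ennreal (c powr (-a)) * ennreal (Gamma a)"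
    using a by (subst nn_integral_cmult) (auto simp: Gamma_conv_nn_integral_real)
  also have "\<dots> = ennreal (Gamma a * c powr (-a))"
  proof -
    have "ennreal (Gamma a * c powr (-a)) = ennreal (Gamma a) * ennreal (c powr (-a))"
      by (rule ennreal_mult') (use Gamma_real_pos[OF a] in simp)
    then show ?thesis by (simp only: mult.commute)
  qed
  finally show ?thesis .
qed

lemma vec_scale:
  fixes F :: "real^'n \<Rightarrow> ennreal" and s :: real
  assumes s: "s > 0" and F[measurable]: "F \<in> borel_measurable borel"
  shows "(\<integral>\<^sup>+y. F y \<partial>lborel) = ennreal (s ^ CARD('n)) * (\<integral>\<^sup>+z. F (s *\<^sub>R z) \<partial>lborel)"
proof -
  have L: "density (distr lborel borel (\<lambda>x. 0 + s *\<^sub>R x)) (\<lambda>_. ennreal (\<bar>s\<bar> ^ DIM(real^'n))) = (lborel :: (real^'n) measure)"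
    using lborel_affine[where 'a="real^'n", of s 0] s by (metis less_irrefl)
  have "(\<integral>\<^sup>+y. F y \<partial>lborel) = (\<integral>\<^sup>+y. F y \<partial>density (distr lborel borel (\<lambda>x. 0 + s *\<^sub>R x)) (\<lambda>_. ennreal (\<bar>s\<bar> ^ DIM(real^'n))))"
    by (simp only: L)
  also have "\<dots> = (\<integral>\<^sup>+y. ennreal (\<bar>s\<bar> ^ DIM(real^'n)) * F y \<partial>distr lborel borel (\<lambda>x. 0 + s *\<^sub>R x))"
    by (rule nn_integral_density) auto
  also have "\<dots> = (\<integral>\<^sup>+z. ennreal (\<bar>s\<bar> ^ DIM(real^'n)) * F (0 + s *\<^sub>R z) \<partial>lborel)"
    by (rule nn_integral_distr) auto
  also have "\<dots> = ennreal (s ^ CARD('n)) * (\<integral>\<^sup>+z. F (s *\<^sub>R z) \<partial>lborel)"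
    using s by (subst nn_integral_cmult) auto
  finally show ?thesis .
qed

lemma gauss_scale:
  fixes h :: "real^'n \<Rightarrow> real" and t D q :: real
  assumes t: "t > 0" and D: "D > 0" and h[measurable]: "h \<in> borel_measurable borel"
    and hom: "\<forall>c>0. \<forall>x. h (c *\<^sub>R x) = c powr q * h x"
  shows "(\<integral>\<^sup>+y. ennreal (h y) * ennreal (exp (- t * (y \<bullet> y) / D)) \<partial>lborel)
       = ennreal ((D / (2*t)) powr ((real CARD('n) + q) / 2)) * (\<integral>\<^sup>+z. ennreal (h z) * ennreal (exp (- (z \<bullet> z) / 2)) \<partial>lborel)"
proof -
  define s where "s = (D / (2*t)) powr (1/2)"
  have s: "s > 0" using t D by (simp add: s_def)
  have s2: "s * s = D / (2*t)" using t D by (simp add: s_def powr_add[symmetric])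
  have "(\<integral>\<^sup>+y. ennreal (h y) * ennreal (exp (- t * (y \<bullet> y) / D)) \<partial>lborel)
     = ennreal (s ^ CARD('n)) * (\<integral>\<^sup>+z. ennreal (h (s *\<^sub>R z)) * ennreal (exp (- t * ((s *\<^sub>R z) \<bullet> (s *\<^sub>R z)) / D)) \<partial>lborel)"
    by (rule vec_scale[OF s]) measurable
  also have "(\<lambda>z::real^'n. ennreal (h (s *\<^sub>R z)) * ennreal (exp (- t * ((s *\<^sub>R z) \<bullet> (s *\<^sub>R z)) / D)))
     = (\<lambda>z. ennreal (s powr q) * (ennreal (h z) * ennreal (exp (- (z \<bullet> z) / 2))))"
  proof
    fix z :: "real^'n"
    have "(s *\<^sub>R z) \<bullet> (s *\<^sub>R z) = (s * s) * (z \<bullet> z)" by simp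
    then have e: "- t * ((s *\<^sub>R z) \<bullet> (s *\<^sub>R z)) / D = - (z \<bullet> z) / 2"
      using s2 t D by simp
    have hz: "h (s *\<^sub>R z) = s powr q * h z" using hom s by blast
    show "ennreal (h (s *\<^sub>R z)) * ennreal (exp (- t * ((s *\<^sub>R z) \<bullet> (s *\<^sub>R z)) / D))
        = ennreal (s powr q) * (ennreal (h z) * ennreal (exp (- (z \<bullet> z) / 2)))"
      unfolding e hz using ennreal_mult'[of "s powr q" "h z"] by (simp add: mult.assoc)
  qed
  also have "ennreal (s ^ CARD('n)) * (\<integral>\<^sup>+z. ennreal (s powr q) * (ennreal (h z) * ennreal (exp (- (z \<bullet> z) / 2))) \<partial>lborel)
     = ennreal (s ^ CARD('n)) * ennreal (s powr q) * (\<integral>\<^sup>+z. ennreal (h z) * ennreal (exp (- (z \<bullet> z) / 2)) \<partial>lborel)"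
    by (subst nn_integral_cmult) (simp_all add: mult.assoc)
  also have "ennreal (s ^ CARD('n)) * ennreal (s powr q) = ennreal ((D / (2*t)) powr ((real CARD('n) + q) / 2))"
  proof -
    have "s ^ CARD('n) * s powr q = s powr (real CARD('n) + q)"
      using s by (simp add: powr_add powr_realpow)
    also have "\<dots> = (D / (2*t)) powr ((real CARD('n) + q) / 2)"
      using s t D unfolding s_def by (simp add: powr_powr)
    finally show ?thesis using s by (simp add: ennreal_mult'[symmetric])
  qed
  finally show ?thesis .
qed

lemma key:
  fixes h :: "real^'n \<Rightarrow> real" and a q D :: real
  assumes a: "a > 0" and b: "a - (real CARD('n) + q) / 2 > 0" and D: "D > 0"
    and h[measurable]: "h \<in> borel_measurable borel"
    and hom: "\<forall>c>0. \<forall>x. h (c *\<^sub>R x) = c powr q * h x"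
  shows "ennreal (Gamma a) * (\<integral>\<^sup>+y. ennreal (h y) * ennreal ((1 + y \<bullet> y / D) powr (-a)) \<partial>lborel)
       = ennreal ((D/2) powr ((real CARD('n) + q) / 2) * Gamma (a - (real CARD('n) + q) / 2))
         * (\<integral>\<^sup>+z. ennreal (h z) * ennreal (exp (- (z \<bullet> z) / 2)) \<partial>lborel)"
proof -
  define m where "m = (real CARD('n) + q) / 2"
  define b where "b = a - m"
  have b0: "b > 0" using b by (simp add: b_def m_def)
  define I where "I = (\<integral>\<^sup>+z. ennreal (h z) * ennreal (exp (- (z \<bullet> z) / 2)) \<partial>lborel)"
  define G where "G = (\<lambda>(t::real) (y::real^'n). ennreal (indicator {0..} t * t powr (a-1) / exp ((1 + y \<bullet> y / D) * t)))"
  have Gm[measurable]: "case_prod G \<in> borel_measurable (lborel \<Otimes>\<^sub>M lborel)"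
    unfolding G_def by measurable
  have "ennreal (Gamma a) * (\<integral>\<^sup>+y. ennreal (h y) * ennreal ((1 + y \<bullet> y / D) powr (-a)) \<partial>lborel)
      = (\<integral>\<^sup>+y. ennreal (Gamma a) * (ennreal (h y) * ennreal ((1 + y \<bullet> y / D) powr (-a))) \<partial>lborel)"
    by (subst nn_integral_cmult) auto
  also have "\<dots> = (\<integral>\<^sup>+y. ennreal (h y) * ennreal (Gamma a * (1 + y \<bullet> y / D) powr (-a)) \<partial>lborel)"
  proof (rule nn_integral_cong)
    fix y :: "real^'n"
    have "ennreal (Gamma a * (1 + y \<bullet> y / D) powr (-a)) = ennreal (Gamma a) * ennreal ((1 + y \<bullet> y / D) powr (-a))"
      by (rule ennreal_mult) (use Gamma_real_pos[OF a] in auto)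
    then show "ennreal (Gamma a) * (ennreal (h y) * ennreal ((1 + y \<bullet> y / D) powr (-a)))
       = ennreal (h y) * ennreal (Gamma a * (1 + y \<bullet> y / D) powr (-a))"
      by (simp add: mult_ac)
  qed
  also have "\<dots> = (\<integral>\<^sup>+y. ennreal (h y) * (\<integral>\<^sup>+t. G t y \<partial>lborel) \<partial>lborel)"
  proof (rule nn_integral_cong)
    fix y :: "real^'n"
    have "1 + y \<bullet> y / D > 0" using D by (simp add: add_pos_nonneg)
    then show "ennreal (h y) * ennreal (Gamma a * (1 + y \<bullet> y / D) powr (-a)) = ennreal (h y) * (\<integral>\<^sup>+t. G t y \<partial>lborel)"
      unfolding G_def using gamma_scaled[OF a] by simp
  qed
  also have "\<dots> = (\<integral>\<^sup>+y. \<integral>\<^sup>+t. ennreal (h y) * G t y \<partial>lborel \<partial>lborel)"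
  proof (rule nn_integral_cong)
    fix y :: "real^'n"
    have "(\<lambda>t. G t y) \<in> borel_measurable lborel" unfolding G_def by measurable
    then show "ennreal (h y) * (\<integral>\<^sup>+t. G t y \<partial>lborel) = (\<integral>\<^sup>+t. ennreal (h y) * G t y \<partial>lborel)"
      by (rule nn_integral_cmult[symmetric])
  qed
  also have "\<dots> = (\<integral>\<^sup>+t. \<integral>\<^sup>+y. ennreal (h y) * G t y \<partial>lborel \<partial>lborel)"
    by (rule lborel_pair.Fubini') measurable
  also have "\<dots> = (\<integral>\<^sup>+t. ennreal (indicator {0..} t * t powr (b-1) / exp t) * ennreal ((D/2) powr m) * I \<partial>lborel)"
  proof (rule nn_integral_cong)
    fix t :: real
    have "(\<integral>\<^sup>+y. ennreal (h y) * G t y \<partial>lborel)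
        = (\<integral>\<^sup>+y. ennreal (indicator {0..} t * t powr (a-1) / exp t) * (ennreal (h y) * ennreal (exp (- t * (y \<bullet> y) / D))) \<partial>lborel)"
    proof (rule nn_integral_cong)
      fix y :: "real^'n"
      have "exp ((1 + y \<bullet> y / D) * t) = exp t * exp (t * (y \<bullet> y) / D)"
        by (simp add: exp_add[symmetric] algebra_simps)
      then have "indicator {0..} t * t powr (a-1) / exp ((1 + y \<bullet> y / D) * t)
          = (indicator {0..} t * t powr (a-1) / exp t) * exp (- t * (y \<bullet> y) / D)"
        by (simp add: exp_minus field_simps)
      moreover have "indicator {0..} t * t powr (a-1) / exp t \<ge> 0" by (simp add: indicator_def)
      ultimately have "G t y = ennreal (indicator {0..} t * t powr (a-1) / exp t) * ennreal (exp (- t * (y \<bullet> y) / D))"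
        unfolding G_def by (simp only: ennreal_mult')
      then show "ennreal (h y) * G t y = ennreal (indicator {0..} t * t powr (a-1) / exp t) * (ennreal (h y) * ennreal (exp (- t * (y \<bullet> y) / D)))"
        by (simp only: mult_ac)
    qed
    also have "\<dots> = ennreal (indicator {0..} t * t powr (a-1) / exp t) * (\<integral>\<^sup>+y. ennreal (h y) * ennreal (exp (- t * (y \<bullet> y) / D)) \<partial>lborel)"
      by (rule nn_integral_cmult) measurable
    also have "\<dots> = ennreal (indicator {0..} t * t powr (b-1) / exp t) * ennreal ((D/2) powr m) * I"
    proof (cases "t > 0")
      case True
      have "ennreal (indicator {0..} t * t powr (a-1) / exp t) * (\<integral>\<^sup>+y. ennreal (h y) * ennreal (exp (- t * (y \<bullet> y) / D)) \<partial>lborel)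
          = ennreal (t powr (a-1) / exp t) * (ennreal ((D / (2*t)) powr m) * I)"
        using gauss_scale[OF True D h hom] True by (simp add: I_def m_def)
      also have "\<dots> = ennreal (t powr (a-1) / exp t * (D / (2*t)) powr m) * I"
      proof -
        have "ennreal (t powr (a-1) / exp t * (D / (2*t)) powr m) = ennreal (t powr (a-1) / exp t) * ennreal ((D / (2*t)) powr m)"
          by (rule ennreal_mult) auto
        then show ?thesis by (simp only: mult.assoc)
      qed
      also have "t powr (a-1) / exp t * (D / (2*t)) powr m = t powr (b-1) / exp t * (D/2) powr m"
      proof -
        have "(D / (2*t)) powr m = (D/2) powr m / t powr m"
          using True D by (simp add: powr_divide[symmetric])
        moreover have "t powr (a-1) / t powr m = t powr (b-1)"
          using True by (simp add: b_def powr_diff[symmetric] algebra_simps)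
        moreover have "t powr (a-1) / exp t * ((D/2) powr m / t powr m) = (t powr (a-1) / t powr m) * (D/2) powr m / exp t"
          using True by (simp add: field_simps)
        ultimately show ?thesis by simp
      qed
      finally have F: "ennreal (indicator {0..} t * t powr (a-1) / exp t) * (\<integral>\<^sup>+y. ennreal (h y) * ennreal (exp (- t * (y \<bullet> y) / D)) \<partial>lborel)
          = ennreal (t powr (b-1) / exp t * (D/2) powr m) * I" .
      have E: "ennreal (t powr (b-1) / exp t * (D/2) powr m) = ennreal (t powr (b-1)/exp t) * ennreal ((D/2) powr m)"
        by (rule ennreal_mult) auto
      have ind: "indicator {0..} t = (1::real)" using True by (simp add: indicator_def)
      show ?thesis unfolding F by (simp only: E ind mult_1_left)
    next
      case False
      then have z: "indicator {0..} t * t powr (a-1) / exp t = (0::real)" "indicator {0..} t * t powr (b-1) / exp t = (0::real)"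
        by (auto simp: indicator_def)
      show ?thesis unfolding z by simp
    qed
    finally show "(\<integral>\<^sup>+y. ennreal (h y) * G t y \<partial>lborel) = ennreal (indicator {0..} t * t powr (b-1) / exp t) * ennreal ((D/2) powr m) * I" .
  qed
  also have "\<dots> = ennreal (Gamma b) * ennreal ((D/2) powr m) * I"
    using b0 by (simp add: nn_integral_multc Gamma_conv_nn_integral_real)
  also have "\<dots> = ennreal ((D/2) powr m * Gamma b) * I"
    using Gamma_real_pos[OF b0] by (simp add: ennreal_mult mult.commute)
  finally show ?thesis by (simp add: I_def m_def b_def)
qed

lemma dens_scaled:
  fixes c :: real assumes c: "c > 0"
  shows "t_std_density nu' (c *\<^sub>R mat 1 :: real^'n^'n) y
    = Gamma ((nu' + real CARD('n)) / 2) / Gamma (nu' / 2) * ((nu' - 2) * pi) powr (- real CARD('n) / 2)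
      * (c ^ CARD('n)) powr (-1/2) * (1 + (y \<bullet> y) / (c * (nu' - 2))) powr (- (nu' + real CARD('n)) / 2)"
proof -
  have "y \<bullet> (matrix_inv (c *\<^sub>R mat 1 :: real^'n^'n) *v y) / (nu' - 2) = (y \<bullet> y) / (c * (nu' - 2))"
    using c by (simp add: scaled_inv)
  then show ?thesis unfolding t_std_density_def det_scaled by simp
qed

lemma dens_X:
  assumes nu: "nu > 2"
  shows "t_std_density nu (mat 1 :: real^'n^'n) y
    = Gamma ((nu + real CARD('n)) / 2) / Gamma (nu / 2) * ((nu - 2) * pi) powr (- real CARD('n) / 2)
      * (1 + (y \<bullet> y) / (nu - 2)) powr (- (nu + real CARD('n)) / 2)"
  using dens_scaled[of 1 nu y] by simp

lemma dens_Y: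
  assumes nu: "nu > 2" and p: "p > 2 - nu"
  shows "t_std_density (nu + p) (((nu - 2) / (nu + p - 2)) *\<^sub>R mat 1 :: real^'n^'n) y
    = Gamma ((nu + p + real CARD('n)) / 2) / Gamma ((nu + p) / 2) * ((nu - 2) * pi) powr (- real CARD('n) / 2)
      * (1 + (y \<bullet> y) / (nu - 2)) powr (- (nu + p + real CARD('n)) / 2)"
proof -
  define k where "k = (nu - 2) / (nu + p - 2)"
  have k: "k > 0" using nu p by (simp add: k_def)
  have k2: "k * (nu + p - 2) = nu - 2" using nu p by (simp add: k_def)
  have "(k ^ CARD('n)) powr (-1/2) = k powr (- real CARD('n) / 2)"
    using k by (simp add: powr_realpow[symmetric] powr_powr)
  moreover have "((nu + p - 2) * pi) powr (- real CARD('n) / 2) * k powr (- real CARD('n) / 2)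
      = ((nu - 2) * pi) powr (- real CARD('n) / 2)"
  proof -
    have "((nu + p - 2) * pi) powr (- real CARD('n) / 2) * k powr (- real CARD('n) / 2)
        = ((nu + p - 2) * pi * k) powr (- real CARD('n) / 2)"
      using k nu p by (simp add: powr_mult)
    also have "(nu + p - 2) * pi * k = (k * (nu + p - 2)) * pi" by (simp only: mult_ac)
    also have "\<dots> = (nu - 2) * pi" by (simp only: k2)
    finally show ?thesis .
  qed
  ultimately show ?thesis
    using dens_scaled[OF k, of "nu + p" y] k2
    unfolding k_def[symmetric] by (simp add: add_ac mult_ac)
qed

lemma W_id:
  assumes nu: "nu > 2" and p: "p > 2 - nu"
  shows "((nu + real CARD('n)) / (nu - 2 + x \<bullet> x)) powr (p / 2) * t_std_density nu (mat 1 :: real^'n^'n) x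
       = zeta nu CARD('n) p 0 * t_std_density (nu + p) (((nu - 2) / (nu + p - 2)) *\<^sub>R mat 1 :: real^'n^'n) x"
proof -
  define N where "N = real CARD('n)"
  define u where "u = 1 + (x \<bullet> x) / (nu - 2)"
  have u: "u > 0" using nu by (simp add: u_def add_pos_nonneg)
  define A where "A = (nu + N) / (nu - 2)"
  have A: "A > 0" using nu by (simp add: A_def N_def)
  define P where "P = ((nu - 2) * pi) powr (- N / 2)"
  have "nu - 2 + x \<bullet> x = (nu - 2) * u" using nu by (simp add: u_def field_simps)
  then have W: "(nu + N) / (nu - 2 + x \<bullet> x) = A / u" by (simp add: A_def)
  have Wp: "(A / u) powr (p / 2) = A powr (p/2) / u powr (p/2)"
    using A u by (simp add: powr_divide)
  have U: "u powr (- (nu + N) / 2) / u powr (p/2) = u powr (- (nu + p + N) / 2)"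
  proof -
    have "u powr (- (nu + N) / 2) / u powr (p/2) = u powr (- (nu + N) / 2 - p/2)"
      using u by (simp only: powr_diff)
    also have "- (nu + N) / 2 - p/2 = - (nu + p + N) / 2" by (simp add: field_simps)
    finally show ?thesis .
  qed
  have Gp: "Gamma ((nu + p) / 2) > 0" using p by (intro Gamma_real_pos) simp
  have GpN: "Gamma ((nu + p + N) / 2) > 0" using p by (intro Gamma_real_pos) (simp add: N_def add_pos_nonneg)
  have z: "zeta nu CARD('n) p 0 = A powr (p/2) * (Gamma ((nu + N) / 2) / Gamma (nu / 2)) * (Gamma ((nu + p) / 2) / Gamma ((nu + p + N) / 2))"
    using nu by (simp add: zeta_def A_def N_def)
  show ?thesis
    unfolding dens_X[OF nu] dens_Y[OF nu p] N_def[symmetric] u_def[symmetric] P_def[symmetric] W Wp z U[symmetric]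
    using Gp GpN u by (simp add: field_simps)
qed

lemma powr_ident:
  fixes D N q :: real assumes D: "D > 0"
  shows "(D * pi) powr (- N / 2) * (D / 2) powr ((N + q) / 2) = (D / 2) powr (q / 2) * (2 * pi) powr (- N / 2)"
proof -
  have F1: "(D * pi) powr (- N / 2) = (2 * pi) powr (- N / 2) * (D / 2) powr (- N / 2)"
  proof -
    have dp: "D * pi = (2 * pi) * (D / 2)" by simp
    have "(D * pi) powr (- N / 2) = ((2 * pi) * (D / 2)) powr (- N / 2)" by (simp only: dp)
    also have "\<dots> = (2 * pi) powr (- N / 2) * (D / 2) powr (- N / 2)"
      by (rule powr_mult)
    finally show ?thesis .
  qed
  have F2: "(D / 2) powr ((N + q) / 2) = (D / 2) powr (N / 2) * (D / 2) powr (q / 2)"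
    by (simp add: powr_add[symmetric] add_divide_distrib)
  have F3: "(D / 2) powr (- N / 2) * (D / 2) powr (N / 2) = 1"
    using D by (simp add: powr_minus field_simps)
  have "(D * pi) powr (- N / 2) * (D / 2) powr ((N + q) / 2)
      = (2 * pi) powr (- N / 2) * ((D / 2) powr (- N / 2) * (D / 2) powr (N / 2)) * (D / 2) powr (q / 2)"
    unfolding F1 F2 by (simp only: mult.assoc)
  also have "\<dots> = (2 * pi) powr (- N / 2) * (D / 2) powr (q / 2)"
    unfolding F3 by simp
  finally show ?thesis by (simp only: mult.commute)
qed

lemma nnY:
  fixes h :: "real^'n \<Rightarrow> real"
  assumes nu: "nu > 2" and p: "p > 2 - nu" and q: "q < nu + p"
    and h[measurable]: "h \<in> borel_measurable borel"
    and hom: "\<forall>c>0. \<forall>x. h (c *\<^sub>R x) = c powr q * h x"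
  shows "(\<integral>\<^sup>+y. ennreal (h y) \<partial>t_std (nu + p) (((nu - 2) / (nu + p - 2)) *\<^sub>R mat 1 :: real^'n^'n))
       = ennreal (((nu - 2) / 2) powr (q / 2) * Gamma ((nu + p - q) / 2) / Gamma ((nu + p) / 2))
         * (\<integral>\<^sup>+z. ennreal (h z) \<partial>std_normal_vec)"
proof -
  define N where "N = real CARD('n)"
  define D where "D = nu - 2"
  have D: "D > 0" using nu by (simp add: D_def)
  define a where "a = (nu + p + N) / 2"
  have a: "a > 0" using p by (simp add: a_def N_def add_pos_nonneg)
  have b: "a - (N + q) / 2 > 0" using q by (simp add: a_def field_simps)
  have ab: "a - (N + q) / 2 = (nu + p - q) / 2" by (simp add: a_def field_simps)
  define CY where "CY = Gamma a / Gamma ((nu + p) / 2) * (D * pi) powr (- N / 2)"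
  have Gp: "Gamma ((nu + p) / 2) > 0" using p by (intro Gamma_real_pos) simp
  have CY: "CY \<ge> 0" using Gamma_real_pos[OF a] Gp by (simp add: CY_def)
  define J where "J = (\<integral>\<^sup>+z. ennreal (h z) * ennreal (exp (- (z \<bullet> z) / 2)) \<partial>lborel)"
  define L where "L = (\<integral>\<^sup>+y. ennreal (h y) * ennreal ((1 + y \<bullet> y / D) powr (-a)) \<partial>lborel)"
  have tY: "t_std (nu + p) (((nu - 2) / (nu + p - 2)) *\<^sub>R mat 1 :: real^'n^'n)
      = density lborel (\<lambda>y. ennreal (CY * (1 + y \<bullet> y / D) powr (-a)))"
  proof -
    have ea: "- (nu + p + real CARD('n)) / 2 = - a" unfolding a_def N_def by linarith
    show ?thesis unfolding t_std_def dens_Y[OF nu p] ea unfolding CY_def D_def N_def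
      by (simp add: a_def N_def)
  qed
  have "(\<integral>\<^sup>+y. ennreal (h y) \<partial>t_std (nu + p) (((nu - 2) / (nu + p - 2)) *\<^sub>R mat 1 :: real^'n^'n))
      = (\<integral>\<^sup>+y. ennreal (CY * (1 + y \<bullet> y / D) powr (-a)) * ennreal (h y) \<partial>lborel)"
    unfolding tY by (rule nn_integral_density) auto
  also have "\<dots> = (\<integral>\<^sup>+y. ennreal CY * (ennreal (h y) * ennreal ((1 + y \<bullet> y / D) powr (-a))) \<partial>lborel)"
    using CY by (intro nn_integral_cong) (simp add: ennreal_mult mult_ac)
  also have "\<dots> = ennreal CY * L"
    unfolding L_def by (rule nn_integral_cmult) measurable
  also have "\<dots> = ennreal (CY / Gamma a) * (ennreal (Gamma a) * L)"
  proof -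
    have "ennreal CY = ennreal (CY / Gamma a * Gamma a)" using Gamma_real_pos[OF a] by simp
    also have "\<dots> = ennreal (CY / Gamma a) * ennreal (Gamma a)"
      by (rule ennreal_mult) (use Gamma_real_pos[OF a] CY in auto)
    finally show ?thesis by (simp only: mult.assoc)
  qed
  also have "ennreal (Gamma a) * L = ennreal ((D/2) powr ((N + q) / 2) * Gamma ((nu + p - q) / 2)) * J"
    using key[OF a _ D h hom] b ab unfolding L_def J_def N_def by simp
  also have "ennreal (CY / Gamma a) * (ennreal ((D/2) powr ((N + q) / 2) * Gamma ((nu + p - q) / 2)) * J)
      = ennreal (CY / Gamma a * ((D/2) powr ((N + q) / 2) * Gamma ((nu + p - q) / 2))) * J"
  proof -
    have "Gamma ((nu + p - q) / 2) > 0" using q by (intro Gamma_real_pos) simp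
    then have "ennreal (CY / Gamma a * ((D/2) powr ((N + q) / 2) * Gamma ((nu + p - q) / 2)))
       = ennreal (CY / Gamma a) * ennreal ((D/2) powr ((N + q) / 2) * Gamma ((nu + p - q) / 2))"
      using CY Gamma_real_pos[OF a] by (intro ennreal_mult) auto
    then show ?thesis by (simp only: mult.assoc)
  qed
  also have "CY / Gamma a * ((D/2) powr ((N + q) / 2) * Gamma ((nu + p - q) / 2))
      = (((nu - 2) / 2) powr (q / 2) * Gamma ((nu + p - q) / 2) / Gamma ((nu + p) / 2)) * (2 * pi) powr (- N / 2)"
  proof -
    have "CY / Gamma a * ((D/2) powr ((N + q) / 2) * Gamma ((nu + p - q) / 2))
        = ((D * pi) powr (- N / 2) * (D / 2) powr ((N + q) / 2)) * Gamma ((nu + p - q) / 2) / Gamma ((nu + p) / 2)"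
      using Gamma_real_pos[OF a] by (simp add: CY_def field_simps)
    also have "\<dots> = (D / 2) powr (q / 2) * (2 * pi) powr (- N / 2) * Gamma ((nu + p - q) / 2) / Gamma ((nu + p) / 2)"
      by (simp only: powr_ident[OF D])
    finally show ?thesis by (simp add: D_def field_simps)
  qed
  also have "ennreal ((((nu - 2) / 2) powr (q / 2) * Gamma ((nu + p - q) / 2) / Gamma ((nu + p) / 2)) * (2 * pi) powr (- N / 2)) * J
      = ennreal (((nu - 2) / 2) powr (q / 2) * Gamma ((nu + p - q) / 2) / Gamma ((nu + p) / 2)) * (ennreal ((2 * pi) powr (- N / 2)) * J)"
  proof -
    have "Gamma ((nu + p - q) / 2) > 0" using q by (intro Gamma_real_pos) simp
    then have "ennreal ((((nu - 2) / 2) powr (q / 2) * Gamma ((nu + p - q) / 2) / Gamma ((nu + p) / 2)) * (2 * pi) powr (- N / 2))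
      = ennreal (((nu - 2) / 2) powr (q / 2) * Gamma ((nu + p - q) / 2) / Gamma ((nu + p) / 2)) * ennreal ((2 * pi) powr (- N / 2))"
      using Gp by (intro ennreal_mult) auto
    then show ?thesis by (simp only: mult.assoc)
  qed
  also have "ennreal ((2 * pi) powr (- N / 2)) * J = (\<integral>\<^sup>+z. ennreal (h z) \<partial>std_normal_vec)"
  proof -
    have "(\<integral>\<^sup>+z. ennreal (h z) \<partial>std_normal_vec) = (\<integral>\<^sup>+z. ennreal (std_normal_vec_density z) * ennreal (h z) \<partial>lborel)"
      unfolding std_normal_vec_def by (rule nn_integral_density) (auto simp: std_normal_vec_density_def)
    also have "\<dots> = (\<integral>\<^sup>+z. ennreal ((2 * pi) powr (- N / 2)) * (ennreal (h z) * ennreal (exp (- (z \<bullet> z) / 2))) \<partial>lborel)"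
      by (intro nn_integral_cong) (simp add: std_normal_vec_density_def N_def ennreal_mult mult_ac)
    also have "\<dots> = ennreal ((2 * pi) powr (- N / 2)) * J"
      unfolding J_def by (rule nn_integral_cmult) measurable
    finally show ?thesis by simp
  qed
  finally show ?thesis .
qed


theorem lemmaA1:
  fixes nu :: real
  assumes nu: "nu > 2"
  defines "W \<equiv> (\<lambda>x::real^'n. (nu + real CARD('n)) / (nu - 2 + x \<bullet> x))"
  shows
    "(\<forall>p (g :: real^'n \<Rightarrow> real).
        p > 2 - nu \<and> g \<in> borel_measurable borel
        \<and> integrable (t_std (nu + p) (((nu - 2) / (nu + p - 2)) *\<^sub>R mat 1)) g
        \<longrightarrow> integrable (t_std nu (mat 1)) (\<lambda>x. W x powr (p / 2) * g x)
          \<and> (\<integral>x. W x powr (p / 2) * g x \<partial>t_std nu (mat 1))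
             = zeta nu CARD('n) p 0
               * (\<integral>y. g y \<partial>t_std (nu + p) (((nu - 2) / (nu + p - 2)) *\<^sub>R mat 1)))
     \<and> (\<forall>p q (g :: real^'n \<Rightarrow> real).
        p > 2 - nu \<and> g \<in> borel_measurable borel
        \<and> integrable (t_std (nu + p) (((nu - 2) / (nu + p - 2)) *\<^sub>R mat 1)) g
        \<and> q < nu + p \<and> (\<forall>c>0. \<forall>x. g (c *\<^sub>R x) = c powr q * g x)
        \<and> integrable std_normal_vec g
        \<longrightarrow> integrable (t_std nu (mat 1)) (\<lambda>x. W x powr (p / 2) * g x)
          \<and> (\<integral>x. W x powr (p / 2) * g x \<partial>t_std nu (mat 1))
             = zeta nu CARD('n) p q * (\<integral>z. g z \<partial>std_normal_vec))"
proof -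
  have Wm[measurable]: "W \<in> borel_measurable borel" unfolding W_def by measurable
  define fX where "fX = t_std_density nu (mat 1 :: real^'n^'n)"
  have fXeq: "fX = (\<lambda>y::real^'n. Gamma ((nu + real CARD('n)) / 2) / Gamma (nu / 2) * ((nu - 2) * pi) powr (- real CARD('n) / 2)
      * (1 + (y \<bullet> y) / (nu - 2)) powr (- (nu + real CARD('n)) / 2))"
    unfolding fX_def by (rule ext) (rule dens_X[OF nu])
  have fXm[measurable]: "fX \<in> borel_measurable borel" unfolding fXeq by measurable
  have G1: "Gamma ((nu + real CARD('n)) / 2) > 0" using nu by (intro Gamma_real_pos) simp
  have G0: "Gamma (nu / 2) > 0" using nu by (intro Gamma_real_pos) simp
  have fX0: "fX x \<ge> 0" for x
    unfolding fXeq using G1 G0 by (auto intro!: mult_nonneg_nonneg divide_nonneg_nonneg less_imp_le)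
  have tX: "t_std nu (mat 1) = density lborel (\<lambda>x. ennreal (fX x))"
    unfolding t_std_def fX_def ..
  have partI: "integrable (t_std nu (mat 1)) (\<lambda>x. W x powr (p / 2) * g x)
          \<and> (\<integral>x. W x powr (p / 2) * g x \<partial>t_std nu (mat 1))
             = zeta nu CARD('n) p 0
               * (\<integral>y. g y \<partial>t_std (nu + p) (((nu - 2) / (nu + p - 2)) *\<^sub>R mat 1))"
    if p: "p > 2 - nu" and g[measurable]: "g \<in> borel_measurable borel"
      and ig: "integrable (t_std (nu + p) (((nu - 2) / (nu + p - 2)) *\<^sub>R mat 1)) g" for p and g :: "real^'n \<Rightarrow> real"
  proof -
    define fY where "fY = t_std_density (nu + p) (((nu - 2) / (nu + p - 2)) *\<^sub>R mat 1 :: real^'n^'n)"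
    have fYeq: "fY = (\<lambda>y::real^'n. Gamma ((nu + p + real CARD('n)) / 2) / Gamma ((nu + p) / 2) * ((nu - 2) * pi) powr (- real CARD('n) / 2)
      * (1 + (y \<bullet> y) / (nu - 2)) powr (- (nu + p + real CARD('n)) / 2))"
      unfolding fY_def by (rule ext) (rule dens_Y[OF nu p])
    have fYm[measurable]: "fY \<in> borel_measurable borel" unfolding fYeq by measurable
    have H1: "Gamma ((nu + p + real CARD('n)) / 2) > 0" using p by (intro Gamma_real_pos) (simp add: add_pos_nonneg)
    have H0: "Gamma ((nu + p) / 2) > 0" using p by (intro Gamma_real_pos) simp
    have fY0: "fY x \<ge> 0" for x
      unfolding fYeq using H1 H0 by (auto intro!: mult_nonneg_nonneg divide_nonneg_nonneg less_imp_le)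
    have tY: "t_std (nu + p) (((nu - 2) / (nu + p - 2)) *\<^sub>R mat 1) = density lborel (\<lambda>x. ennreal (fY x))"
      unfolding t_std_def fY_def ..
    have zpos: "zeta nu CARD('n) p 0 > 0"
      unfolding zeta_def using nu G1 G0 H1 H0 by (auto intro!: mult_pos_pos divide_pos_pos)
    have eqp: "fX x *\<^sub>R (W x powr (p / 2) * g x) = zeta nu CARD('n) p 0 * (fY x *\<^sub>R g x)" for x
    proof -
      have "W x powr (p / 2) * fX x = zeta nu CARD('n) p 0 * fY x"
        unfolding W_def fX_def fY_def by (rule W_id[OF nu p])
      then have "(W x powr (p / 2) * fX x) * g x = (zeta nu CARD('n) p 0 * fY x) * g x" by simp
      then show ?thesis by (simp only: real_scaleR_def mult_ac)
    qed
    have m1: "(\<lambda>x. W x powr (p / 2) * g x) \<in> borel_measurable lborel" by measurable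
    have m2: "g \<in> borel_measurable lborel" by measurable
    have fXm': "fX \<in> borel_measurable lborel" by measurable
    have fYm': "fY \<in> borel_measurable lborel" by measurable
    have i1: "integrable (t_std nu (mat 1)) (\<lambda>x. W x powr (p / 2) * g x)
        \<longleftrightarrow> integrable lborel (\<lambda>x. fX x *\<^sub>R (W x powr (p / 2) * g x))"
      unfolding tX by (rule integrable_density[OF m1 fXm']) (simp add: fX0)
    have i2: "integrable (t_std (nu + p) (((nu - 2) / (nu + p - 2)) *\<^sub>R mat 1)) g
        \<longleftrightarrow> integrable lborel (\<lambda>x. fY x *\<^sub>R g x)"
      unfolding tY by (rule integrable_density[OF m2 fYm']) (simp add: fY0)
    have int: "integrable (t_std nu (mat 1)) (\<lambda>x. W x powr (p / 2) * g x)"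
      using ig zpos unfolding i1 i2 eqp by simp
    have "(\<integral>x. W x powr (p / 2) * g x \<partial>t_std nu (mat 1)) = (\<integral>x. fX x *\<^sub>R (W x powr (p / 2) * g x) \<partial>lborel)"
      unfolding tX by (rule integral_density[OF m1 fXm']) (simp add: fX0)
    also have "\<dots> = zeta nu CARD('n) p 0 * (\<integral>x. fY x *\<^sub>R g x \<partial>lborel)"
      unfolding eqp by simp
    also have "(\<integral>x. fY x *\<^sub>R g x \<partial>lborel) = (\<integral>y. g y \<partial>t_std (nu + p) (((nu - 2) / (nu + p - 2)) *\<^sub>R mat 1))"
      unfolding tY by (rule integral_density[OF m2 fYm', symmetric]) (simp add: fY0)
    finally show ?thesis using int by simp
  qed
  show ?thesis
  proof (intro conjI allI impI)
    fix p and g :: "real^'n \<Rightarrow> real"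
    assume "p > 2 - nu \<and> g \<in> borel_measurable borel
        \<and> integrable (t_std (nu + p) (((nu - 2) / (nu + p - 2)) *\<^sub>R mat 1)) g"
    then show "integrable (t_std nu (mat 1)) (\<lambda>x. W x powr (p / 2) * g x)"
      and "(\<integral>x. W x powr (p / 2) * g x \<partial>t_std nu (mat 1))
             = zeta nu CARD('n) p 0
               * (\<integral>y. g y \<partial>t_std (nu + p) (((nu - 2) / (nu + p - 2)) *\<^sub>R mat 1))"
      using partI by blast+
  next
    fix p q and g :: "real^'n \<Rightarrow> real"
    assume A: "p > 2 - nu \<and> g \<in> borel_measurable borel
        \<and> integrable (t_std (nu + p) (((nu - 2) / (nu + p - 2)) *\<^sub>R mat 1)) g
        \<and> q < nu + p \<and> (\<forall>c>0. \<forall>x. g (c *\<^sub>R x) = c powr q * g x)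
        \<and> integrable std_normal_vec g"
    then have p: "p > 2 - nu" and g[measurable]: "g \<in> borel_measurable borel"
      and igT: "integrable (t_std (nu + p) (((nu - 2) / (nu + p - 2)) *\<^sub>R mat 1)) g"
      and q: "q < nu + p" and hom: "\<forall>c>0. \<forall>x. g (c *\<^sub>R x) = c powr q * g x"
      and igN: "integrable std_normal_vec g" by auto
    have PI: "integrable (t_std nu (mat 1)) (\<lambda>x. W x powr (p / 2) * g x)"
      "(\<integral>x. W x powr (p / 2) * g x \<partial>t_std nu (mat 1))
             = zeta nu CARD('n) p 0
               * (\<integral>y. g y \<partial>t_std (nu + p) (((nu - 2) / (nu + p - 2)) *\<^sub>R mat 1))"
      using partI[OF p g igT] by auto
    then show "integrable (t_std nu (mat 1)) (\<lambda>x. W x powr (p / 2) * g x)" by simp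
    define K where "K = ((nu - 2) / 2) powr (q / 2) * Gamma ((nu + p - q) / 2) / Gamma ((nu + p) / 2)"
    have H0: "Gamma ((nu + p) / 2) > 0" using p by (intro Gamma_real_pos) simp
    have Hq: "Gamma ((nu + p - q) / 2) > 0" using q by (intro Gamma_real_pos) simp
    have K0: "K \<ge> 0" unfolding K_def using H0 Hq by simp
    have homm: "\<forall>c>0. \<forall>x. - g (c *\<^sub>R x) = c powr q * - g x" using hom by simp
    have nn1: "(\<integral>\<^sup>+y. ennreal (g y) \<partial>t_std (nu + p) (((nu - 2) / (nu + p - 2)) *\<^sub>R mat 1 :: real^'n^'n))
       = ennreal K * (\<integral>\<^sup>+z. ennreal (g z) \<partial>std_normal_vec)"
      unfolding K_def by (rule nnY[OF nu p q g hom])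
    have nn2: "(\<integral>\<^sup>+y. ennreal (- g y) \<partial>t_std (nu + p) (((nu - 2) / (nu + p - 2)) *\<^sub>R mat 1 :: real^'n^'n))
       = ennreal K * (\<integral>\<^sup>+z. ennreal (- g z) \<partial>std_normal_vec)"
      unfolding K_def by (rule nnY[OF nu p q _ homm]) measurable
    have EY: "(\<integral>y. g y \<partial>t_std (nu + p) (((nu - 2) / (nu + p - 2)) *\<^sub>R mat 1)) = K * (\<integral>z. g z \<partial>std_normal_vec)"
      unfolding real_lebesgue_integral_def[OF igT] real_lebesgue_integral_def[OF igN] nn1 nn2
      using K0 by (simp add: enn2real_mult right_diff_distrib)
    have ZK: "zeta nu CARD('n) p 0 * K = zeta nu CARD('n) p q"
      unfolding zeta_def K_def using nu H0 by simp
    show "(\<integral>x. W x powr (p / 2) * g x \<partial>t_std nu (mat 1))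
             = zeta nu CARD('n) p q * (\<integral>z. g z \<partial>std_normal_vec)"
      unfolding PI(2) EY ZK[symmetric] by simp
  qed
qed

end
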